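(* Let $\Sigma$ be a finite alphabet, let $u,v\in\Sigma^\star$, $i_1,i_2\in[1,|u|]$, $j_1,j_2\in[1,|v|]$ and $n\in\mathbb{N}$. The following are equivalent: (i) (a) $R_n(u)=R_n(v)$; (b) for all $r\in R_n^\star(u)$ and $r'\in R_{n-1}^\star(u)$, $\operatorname{ord}(r(u),r'(u))=\operatorname{ord}(r(v),r'(v))$; (c) $(u,i_1,i_2)\equiv^2_0(v,j_1,j_2)$, i.e. $u_{i_1}=v_{j_1}$, $u_{i_2}=v_{j_2}$ and $\operatorname{ord}(i_1,i_2)=\operatorname{ord}(j_1,j_2)$; (d) for all $r\in R_n^\star(u)$, $\operatorname{ord}(i_1,r(u))=\operatorname{ord}(j_1,r(v))$ and $\operatorname{ord}(i_2,r(u))=\operatorname{ord}(j_2,r(v))$; (ii) $(u,i_1,i_2)\equiv^2_n(v,j_1,j_2)$.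
   Context: Words are finite structures: a word $w=w_1\cdots w_\ell$ has universe $\{1,\dots,\ell\}$, unary predicates $Q_a$ ($a\in\Sigma$) with $Q_a=\{i:w_i=a\}$, and the order $<$. $\mathrm{FO}^2_n[<]$ is first-order logic over this signature (atomic formulas $Q_a(z)$, $z=z'$, $z<z'$) using only the variables $x,y$, with quantifier depth at most $n$. $(w,i,j)$ denotes $w$ with $x$ interpreted as $i$ and $y$ as $j$; $(u,i_1,i_2)\equiv^2_n(v,j_1,j_2)$ means the two structures satisfy the same $\mathrm{FO}^2_n[<]$ formulas with free variables among $x,y$. Boundary positions: for $a\in\Sigma$, $\triangleright_a(w)=\min\{i: w_i=a\}$, $\triangleleft_a(w)=\max\{i: w_i=a\}$, $\triangleright_a(w,q)=\min\{i\in[q+1,|w|]:w_i=a\}$, $\triangleleft_a(w,q)=\max\{i\in[1,q-1]:w_i=a\}$ (undefined if the set is empty). An $n$-ranker ($n\ge1$) is a sequence $r=(p_1,\dots,p_n)$ of boundary positions with $r(w)=p_1(w)$ if $n=1$, undefined if $(p_1,\dots,p_{n-1})(w)$ is undefined, and $p_n(w,(p_1,\dots,p_{n-1})(w))$ otherwise. $R_n(w)$ is the set of $n$-rankers defined over $w$; $R_n^\star(w)=\bigcup_{i\in[1,n]}R_i(w)$ (empty for $n=0$). $\operatorname{ord}(i,j)\in\{<,=,>\}$ is the order type of $i$ and $j$. *)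

theory Defs
  imports Main
begin

definition letter :: "'a list \<Rightarrow> nat \<Rightarrow> 'a" where
  "letter w i = w ! (i - 1)"

datatype var = VX | VY

datatype 'a fo2 =
    Qa 'a var
  | Eqv var var
  | Lessv var var
  | Neg "'a fo2"
  | Conj "'a fo2" "'a fo2"
  | Disj "'a fo2" "'a fo2"
  | Exq var "'a fo2"
  | Allq var "'a fo2"

fun qdepth :: "'a fo2 \<Rightarrow> nat" where
  "qdepth (Qa a z) = 0"
| "qdepth (Eqv z z') = 0"
| "qdepth (Lessv z z') = 0"
| "qdepth (Neg \<phi>) = qdepth \<phi>"
| "qdepth (Conj \<phi> \<psi>) = max (qdepth \<phi>) (qdepth \<psi>)"
| "qdepth (Disj \<phi> \<psi>) = max (qdepth \<phi>) (qdepth \<psi>)"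
| "qdepth (Exq z \<phi>) = Suc (qdepth \<phi>)"
| "qdepth (Allq z \<phi>) = Suc (qdepth \<phi>)"

fun val :: "nat \<Rightarrow> nat \<Rightarrow> var \<Rightarrow> nat" where
  "val i j VX = i"
| "val i j VY = j"

fun sat :: "'a list \<Rightarrow> nat \<Rightarrow> nat \<Rightarrow> 'a fo2 \<Rightarrow> bool" where
  "sat w i j (Qa a z) = (letter w (val i j z) = a)"
| "sat w i j (Eqv z z') = (val i j z = val i j z')"
| "sat w i j (Lessv z z') = (val i j z < val i j z')"
| "sat w i j (Neg \<phi>) = (\<not> sat w i j \<phi>)"
| "sat w i j (Conj \<phi> \<psi>) = (sat w i j \<phi> \<and> sat w i j \<psi>)"
| "sat w i j (Disj \<phi> \<psi>) = (sat w i j \<phi> \<or> sat w i j \<psi>)"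
| "sat w i j (Exq VX \<phi>) = (\<exists>k\<in>{1..length w}. sat w k j \<phi>)"
| "sat w i j (Exq VY \<phi>) = (\<exists>k\<in>{1..length w}. sat w i k \<phi>)"
| "sat w i j (Allq VX \<phi>) = (\<forall>k\<in>{1..length w}. sat w k j \<phi>)"
| "sat w i j (Allq VY \<phi>) = (\<forall>k\<in>{1..length w}. sat w i k \<phi>)"

definition fo2_equiv ::
  "'a list \<Rightarrow> nat \<Rightarrow> nat \<Rightarrow> 'a list \<Rightarrow> nat \<Rightarrow> nat \<Rightarrow> nat \<Rightarrow> bool" where
  "fo2_equiv u i1 i2 v j1 j2 n =
     (\<forall>\<phi> :: 'a fo2. qdepth \<phi> \<le> n \<longrightarrow> (sat u i1 i2 \<phi> \<longleftrightarrow> sat v j1 j2 \<phi>))"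

datatype ordtype = OLess | OEq | OGreater

definition ord :: "nat \<Rightarrow> nat \<Rightarrow> ordtype" where
  "ord i j = (if i < j then OLess else if i = j then OEq else OGreater)"

fun ordo :: "nat option \<Rightarrow> nat option \<Rightarrow> ordtype option" where
  "ordo (Some i) (Some j) = Some (ord i j)"
| "ordo _ _ = None"

datatype 'a bpos = FirstB 'a | LastB 'a

definition bp_abs :: "'a list \<Rightarrow> 'a bpos \<Rightarrow> nat option" where
  "bp_abs w p = (case p of
      FirstB a \<Rightarrow> (let S = {i\<in>{1..length w}. letter w i = a} in
                   if S = {} then None else Some (Min S))
    | LastB a \<Rightarrow> (let S = {i\<in>{1..length w}. letter w i = a} in
                   if S = {} then None else Some (Max S)))"

definition bp_rel :: "'a list \<Rightarrow> 'a bpos \<Rightarrow> nat \<Rightarrow> nat option" where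
  "bp_rel w p q = (case p of
      FirstB a \<Rightarrow> (let S = {i\<in>{q+1..length w}. letter w i = a} in
                   if S = {} then None else Some (Min S))
    | LastB a \<Rightarrow> (let S = {i\<in>{1..q-1}. letter w i = a} in
                   if S = {} then None else Some (Max S)))"

fun rk_cont :: "'a list \<Rightarrow> 'a bpos list \<Rightarrow> nat option \<Rightarrow> nat option" where
  "rk_cont w [] q = q"
| "rk_cont w (p # ps) None = None"
| "rk_cont w (p # ps) (Some q) = rk_cont w ps (bp_rel w p q)"

(* r(w) for a ranker r = (p_1,...,p_n), n \<ge> 1; None = undefined *)
fun rk_eval :: "'a list \<Rightarrow> 'a bpos list \<Rightarrow> nat option" where
  "rk_eval w [] = None"
| "rk_eval w (p # ps) = rk_cont w ps (bp_abs w p)"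

definition R :: "nat \<Rightarrow> 'a list \<Rightarrow> 'a bpos list set" where
  "R n w = {r. length r = n \<and> n \<ge> 1 \<and> rk_eval w r \<noteq> None}"

definition Rstar :: "nat \<Rightarrow> 'a list \<Rightarrow> 'a bpos list set" where
  "Rstar n w = (\<Union>i\<in>{1..n}. R i w)"

end

theory Submission
  imports Defs
begin


fun bl :: "'a bpos \<Rightarrow> 'a" where
  "bl (FirstB a) = a" | "bl (LastB a) = a"

lemma bp_abs_F: "bp_abs w (FirstB a) = bp_rel w (FirstB a) 0"
  by (simp add: bp_abs_def bp_rel_def)
lemma bp_abs_L: "bp_abs w (LastB a) = bp_rel w (LastB a) (Suc (length w))"
  by (simp add: bp_abs_def bp_rel_def)

lemma bp_rel_F_Some:
  "bp_rel w (FirstB a) q = Some p \<longleftrightarrow>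
    (p \<in> {q+1..length w} \<and> letter w p = a \<and> (\<forall>y\<in>{q+1..length w}. letter w y = a \<longrightarrow> p \<le> y))"
proof -
  let ?S = "{i\<in>{q+1..length w}. letter w i = a}"
  have f: "finite ?S" by simp
  show ?thesis
    unfolding bp_rel_def Let_def
    using Min_eq_iff[OF f] by auto
qed

lemma bp_rel_F_None:
  "bp_rel w (FirstB a) q = None \<longleftrightarrow> (\<forall>y\<in>{q+1..length w}. letter w y \<noteq> a)"
  unfolding bp_rel_def Let_def by auto

lemma bp_rel_L_Some:
  "bp_rel w (LastB a) q = Some p \<longleftrightarrow>
    (p \<in> {1..q-1} \<and> letter w p = a \<and> (\<forall>y\<in>{1..q-1}. letter w y = a \<longrightarrow> y \<le> p))"
proof -
  let ?S = "{i\<in>{1..q-1}. letter w i = a}"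
  have f: "finite ?S" by simp
  show ?thesis
    unfolding bp_rel_def Let_def
    using Max_eq_iff[OF f] by auto
qed

lemma bp_rel_L_None:
  "bp_rel w (LastB a) q = None \<longleftrightarrow> (\<forall>y\<in>{1..q-1}. letter w y \<noteq> a)"
  unfolding bp_rel_def Let_def by auto

lemma rk_cont_None[simp]: "rk_cont w ps None = None"
  by (cases ps) auto

lemma rk_cont_append: "rk_cont w (ps @ qs) q = rk_cont w qs (rk_cont w ps q)"
  by (induction ps arbitrary: q) (auto, case_tac q, auto)

lemma rk_eval_append: "r \<noteq> [] \<Longrightarrow> rk_eval w (r @ s) = rk_cont w s (rk_eval w r)"
  by (cases r) (auto simp: rk_cont_append)

lemma rk_eval_snoc: "r \<noteq> [] \<Longrightarrow> rk_eval w (r @ [p]) =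
   (case rk_eval w r of None \<Rightarrow> None | Some q \<Rightarrow> bp_rel w p q)"
  by (simp add: rk_eval_append split: option.split)

lemma bp_rel_Some: "bp_rel w p q = Some x \<Longrightarrow> q \<le> Suc (length w) \<Longrightarrow> x \<in> {1..length w} \<and> letter w x = bl p"
  by (cases p) (auto simp: bp_rel_F_Some bp_rel_L_Some)

lemma rk_eval_Some: "rk_eval w r = Some q \<Longrightarrow> q \<in> {1..length w} \<and> letter w q = bl (last r)"
proof (induction r arbitrary: q rule: rev_induct)
  case Nil then show ?case by simp
next
  case (snoc p xs)
  show ?case
  proof (cases "xs = []")
    case True
    then have "bp_abs w p = Some q" using snoc by simp
    then show ?thesis using True
      by (cases p) (auto simp: bp_abs_F bp_abs_L dest!: bp_rel_Some)
  next
    case False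
    then obtain q0 where q0: "rk_eval w xs = Some q0" "bp_rel w p q0 = Some q"
      using snoc.prems by (auto simp: rk_eval_snoc split: option.splits)
    then show ?thesis using snoc.IH[OF q0(1)] bp_rel_Some[OF q0(2)] by auto
  qed
qed

lemma rk_eval_prefix: "rk_eval w (r @ s) \<noteq> None \<Longrightarrow> r \<noteq> [] \<Longrightarrow> rk_eval w r \<noteq> None"
  by (metis rk_eval_append rk_cont_None)




datatype kd = KGt | KGe | KLt | KLe

abbreviation TT :: "'a fo2" where "TT \<equiv> Eqv VX VX"

fun oth :: "var \<Rightarrow> var" where "oth VX = VY" | "oth VY = VX"

fun holds :: "kd \<Rightarrow> nat \<Rightarrow> nat \<Rightarrow> bool" where
  "holds KGt x p = (p < x)" | "holds KGe x p = (p \<le> x)"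
| "holds KLt x p = (x < p)" | "holds KLe x p = (x \<le> p)"

fun phi :: "kd \<Rightarrow> 'a bpos list \<Rightarrow> var \<Rightarrow> 'a fo2" where
  "phi k [] z = TT"
| "phi KGt (FirstB a # rs) z = Exq (oth z) (Conj (Lessv (oth z) z) (Conj (Qa a (oth z)) (phi KGt rs (oth z))))"
| "phi KGe (FirstB a # rs) z = Exq (oth z) (Conj (Disj (Lessv (oth z) z) (Eqv (oth z) z)) (Conj (Qa a (oth z)) (phi KGt rs (oth z))))"
| "phi KLt (FirstB a # rs) z = Conj (Exq (oth z) (Conj (Qa a (oth z)) (phi KGt rs (oth z))))
     (Neg (Exq (oth z) (Conj (Disj (Lessv (oth z) z) (Eqv (oth z) z)) (Conj (Qa a (oth z)) (phi KGt rs (oth z))))))"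
| "phi KLe (FirstB a # rs) z = Conj (Exq (oth z) (Conj (Qa a (oth z)) (phi KGt rs (oth z))))
     (Neg (Exq (oth z) (Conj (Lessv (oth z) z) (Conj (Qa a (oth z)) (phi KGt rs (oth z))))))"
| "phi KLt (LastB a # rs) z = Exq (oth z) (Conj (Lessv z (oth z)) (Conj (Qa a (oth z)) (phi KLt rs (oth z))))"
| "phi KLe (LastB a # rs) z = Exq (oth z) (Conj (Disj (Lessv z (oth z)) (Eqv z (oth z))) (Conj (Qa a (oth z)) (phi KLt rs (oth z))))"
| "phi KGt (LastB a # rs) z = Conj (Exq (oth z) (Conj (Qa a (oth z)) (phi KLt rs (oth z))))
     (Neg (Exq (oth z) (Conj (Disj (Lessv z (oth z)) (Eqv z (oth z))) (Conj (Qa a (oth z)) (phi KLt rs (oth z))))))"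
| "phi KGe (LastB a # rs) z = Conj (Exq (oth z) (Conj (Qa a (oth z)) (phi KLt rs (oth z))))
     (Neg (Exq (oth z) (Conj (Lessv z (oth z)) (Conj (Qa a (oth z)) (phi KLt rs (oth z))))))"

lemma qdepth_phi: "qdepth (phi k rs z) \<le> length rs"
  by (induction k rs z rule: phi.induct) auto

definition pos :: "'a list \<Rightarrow> 'a bpos list \<Rightarrow> nat option" where
  "pos w rv = rk_eval w (rev rv)"

definition start :: "'a list \<Rightarrow> 'a bpos \<Rightarrow> 'a bpos list \<Rightarrow> nat option" where
  "start w p rs = (if rs = [] then Some (case p of FirstB _ \<Rightarrow> 0 | LastB _ \<Rightarrow> Suc (length w)) else pos w rs)"

lemma pos_cons: "pos w (p # rs) = (case start w p rs of None \<Rightarrow> None | Some q \<Rightarrow> bp_rel w p q)"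
  by (cases p) (auto simp: pos_def start_def rk_eval_snoc bp_abs_F bp_abs_L)

lemma start_le: "start w p rs = Some q \<Longrightarrow> q \<le> Suc (length w)"
  by (cases p) (auto simp: start_def pos_def dest!: rk_eval_Some split: if_splits)

lemma sat_Exq_oth: "sat w i j (Exq (oth z) \<psi>) =
   (\<exists>y\<in>{1..length w}. sat w (if z = VX then i else y) (if z = VX then y else j) \<psi>)"
  by (cases z) auto

lemma val_oth: "val (if z = VX then i else y) (if z = VX then y else j) (oth z) = y"
  by (cases z) auto
lemma val_same: "val (if z = VX then i else y) (if z = VX then y else j) z = val i j z"
  by (cases z) auto

lemma minsem: assumes "finite E" "oo = (if E={} then None else Some (Min E))" shows
 "(\<exists>y\<in>E. y<x) \<longleftrightarrow> (\<exists>p. oo = Some p \<and> p < (x::nat))"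
 "(\<exists>y\<in>E. y\<le>x) \<longleftrightarrow> (\<exists>p. oo=Some p \<and> p \<le> x)"
 "(E \<noteq> {} \<and> \<not>(\<exists>y\<in>E. y\<le>x)) \<longleftrightarrow> (\<exists>p. oo=Some p \<and> x < p)"
 "(E\<noteq>{} \<and> \<not>(\<exists>y\<in>E. y<x)) \<longleftrightarrow> (\<exists>p. oo = Some p \<and> x \<le> p)"
proof -
  have A: "(\<exists>y\<in>E. y<x) \<longleftrightarrow> (E \<noteq> {} \<and> Min E < x)" "(\<exists>y\<in>E. y\<le>x) \<longleftrightarrow> (E \<noteq> {} \<and> Min E \<le> x)"
    using assms(1) by (cases "E = {}"; simp add: Min_less_iff Min_le_iff)+
  show "(\<exists>y\<in>E. y<x) \<longleftrightarrow> (\<exists>p. oo = Some p \<and> p < (x::nat))"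
 "(\<exists>y\<in>E. y\<le>x) \<longleftrightarrow> (\<exists>p. oo=Some p \<and> p \<le> x)"
 "(E \<noteq> {} \<and> \<not>(\<exists>y\<in>E. y\<le>x)) \<longleftrightarrow> (\<exists>p. oo=Some p \<and> x < p)"
 "(E\<noteq>{} \<and> \<not>(\<exists>y\<in>E. y<x)) \<longleftrightarrow> (\<exists>p. oo = Some p \<and> x \<le> p)"
    unfolding A assms(2) by auto
qed
lemma maxsem: assumes "finite E" "oo = (if E={} then None else Some (Max E))" shows
 "(\<exists>y\<in>E. x<y) \<longleftrightarrow> (\<exists>p. oo = Some p \<and> (x::nat) < p)"
 "(\<exists>y\<in>E. x\<le>y) \<longleftrightarrow> (\<exists>p. oo=Some p \<and> x \<le> p)"
 "(E \<noteq> {} \<and> \<not>(\<exists>y\<in>E. x\<le>y)) \<longleftrightarrow> (\<exists>p. oo=Some p \<and> p < x)"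
 "(E\<noteq>{} \<and> \<not>(\<exists>y\<in>E. x<y)) \<longleftrightarrow> (\<exists>p. oo = Some p \<and> p \<le> x)"
proof -
  have A: "(\<exists>y\<in>E. x<y) \<longleftrightarrow> (E \<noteq> {} \<and> x < Max E)" "(\<exists>y\<in>E. x\<le>y) \<longleftrightarrow> (E \<noteq> {} \<and> x \<le> Max E)"
    using assms(1) by (cases "E = {}"; simp add: Max_gr_iff Max_ge_iff)+
  show "(\<exists>y\<in>E. x<y) \<longleftrightarrow> (\<exists>p. oo = Some p \<and> (x::nat) < p)"
 "(\<exists>y\<in>E. x\<le>y) \<longleftrightarrow> (\<exists>p. oo=Some p \<and> x \<le> p)"
 "(E \<noteq> {} \<and> \<not>(\<exists>y\<in>E. x\<le>y)) \<longleftrightarrow> (\<exists>p. oo=Some p \<and> p < x)"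
 "(E\<noteq>{} \<and> \<not>(\<exists>y\<in>E. x<y)) \<longleftrightarrow> (\<exists>p. oo = Some p \<and> p \<le> x)"
    unfolding A assms(2) by auto
qed

lemma pos_F: "pos w (FirstB a # rs) = (let E = {y\<in>{1..length w}. letter w y = a \<and> (rs = [] \<or> (\<exists>q0. pos w rs = Some q0 \<and> q0 < y))}
   in if E = {} then None else Some (Min E))"
proof (cases "rs = []")
  case True then show ?thesis by (simp add: pos_cons start_def bp_rel_def)
next
  case False
  then show ?thesis
  proof (cases "pos w rs")
    case None then show ?thesis using False by (simp add: pos_cons start_def)
  next
    case (Some q0)
    have "{y\<in>{1..length w}. letter w y = a \<and> (\<exists>q0'. Some q0 = Some q0' \<and> q0' < y)} = {i\<in>{q0+1..length w}. letter w i = a}"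
      by auto
    then show ?thesis using False Some by (simp add: pos_cons start_def bp_rel_def)
  qed
qed

lemma pos_L: "pos w (LastB a # rs) = (let E = {y\<in>{1..length w}. letter w y = a \<and> (rs = [] \<or> (\<exists>q0. pos w rs = Some q0 \<and> y < q0))}
   in if E = {} then None else Some (Max E))"
proof (cases "rs = []")
  case True 
  have "{y\<in>{1..length w}. letter w y = a} = {i\<in>{1..Suc (length w) - 1}. letter w i = a}" by simp
  then show ?thesis using True by (simp add: pos_cons start_def bp_rel_def)
next
  case False
  then show ?thesis
  proof (cases "pos w rs")
    case None then show ?thesis using False by (simp add: pos_cons start_def)
  next
    case (Some q0)
    have "q0 \<le> length w" using Some rk_eval_Some unfolding pos_def by fastforce
    then have "{y\<in>{1..length w}. letter w y = a \<and> (\<exists>q0'. Some q0 = Some q0' \<and> y < q0')} = {i\<in>{1..q0-1}. letter w i = a}"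
      by auto
    then show ?thesis using False Some by (simp add: pos_cons start_def bp_rel_def)
  qed
qed




lemma le_or_eq: "((a::nat) < b \<or> a = b) = (a \<le> b)" by auto

lemma phi_sem_gen:
  "sat w i j (phi k rs z) \<longleftrightarrow> (rs = [] \<or> (\<exists>p. pos w rs = Some p \<and> holds k (val i j z) p))"
proof (induction rs arbitrary: k z i j)
  case Nil then show ?case by (cases z) auto
next
  case (Cons p rs)
  note IH = Cons.IH
  show ?case
  proof (cases p)
    case (FirstB a)
    define E where "E = {y\<in>{1..length w}. letter w y = a \<and> (rs = [] \<or> (\<exists>q0. pos w rs = Some q0 \<and> q0 < y))}"
    have fE: "finite E" unfolding E_def by simp
    have P: "pos w (FirstB a # rs) = (if E = {} then None else Some (Min E))"
      unfolding pos_F E_def Let_def ..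
    note M = minsem[OF fE P]
    have e1: "sat w i j (Exq (oth z) (Conj (Lessv (oth z) z) (Conj (Qa a (oth z)) (phi KGt rs (oth z))))) \<longleftrightarrow> (\<exists>y\<in>E. y < val i j z)" for i j
      by (cases z; simp add: IH E_def Bex_def conj_ac; fastforce)
    have e2: "sat w i j (Exq (oth z) (Conj (Disj (Lessv (oth z) z) (Eqv (oth z) z)) (Conj (Qa a (oth z)) (phi KGt rs (oth z))))) \<longleftrightarrow> (\<exists>y\<in>E. y < val i j z \<or> y = val i j z)" for i j
      by (cases z; simp add: IH E_def Bex_def conj_ac; fastforce)
    have e3: "sat w i j (Exq (oth z) (Conj (Qa a (oth z)) (phi KGt rs (oth z)))) \<longleftrightarrow> E \<noteq> {}" for i j
      by (cases z; simp add: IH E_def Bex_def conj_ac; fastforce)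
    show ?thesis using FirstB
      by (cases k) (simp_all only: phi.simps sat.simps(4,5) e1 e2 e3 le_or_eq M holds.simps list.simps simp_thms, simp_all add: P not_le not_less)
  next
    case (LastB a)
    define E where "E = {y\<in>{1..length w}. letter w y = a \<and> (rs = [] \<or> (\<exists>q0. pos w rs = Some q0 \<and> y < q0))}"
    have fE: "finite E" unfolding E_def by simp
    have P: "pos w (LastB a # rs) = (if E = {} then None else Some (Max E))"
      unfolding pos_L E_def Let_def ..
    note M = maxsem[OF fE P]
    have e1: "sat w i j (Exq (oth z) (Conj (Lessv z (oth z)) (Conj (Qa a (oth z)) (phi KLt rs (oth z))))) \<longleftrightarrow> (\<exists>y\<in>E. val i j z < y)" for i j
      by (cases z; simp add: IH E_def Bex_def conj_ac; fastforce)
    have e2: "sat w i j (Exq (oth z) (Conj (Disj (Lessv z (oth z)) (Eqv z (oth z))) (Conj (Qa a (oth z)) (phi KLt rs (oth z))))) \<longleftrightarrow> (\<exists>y\<in>E. val i j z < y \<or> val i j z = y)" for i j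
      by (cases z; simp add: IH E_def Bex_def conj_ac; fastforce)
    have e3: "sat w i j (Exq (oth z) (Conj (Qa a (oth z)) (phi KLt rs (oth z)))) \<longleftrightarrow> E \<noteq> {}" for i j
      by (cases z; simp add: IH E_def Bex_def conj_ac; fastforce)
    show ?thesis using LastB
      by (cases k) (simp_all only: phi.simps sat.simps(4,5) e1 e2 e3 le_or_eq M holds.simps list.simps simp_thms, simp_all add: P not_le not_less)
  qed
qed




definition atq :: "'a list \<Rightarrow> nat \<Rightarrow> nat \<Rightarrow> 'a list \<Rightarrow> nat \<Rightarrow> nat \<Rightarrow> bool" where
  "atq u i1 i2 v j1 j2 \<longleftrightarrow> letter u i1 = letter v j1 \<and> letter u i2 = letter v j2 \<and> ord i1 i2 = ord j1 j2"

lemma ord_eq_iff: "ord a b = ord c d \<Longrightarrow> (a<b \<longleftrightarrow> c<d) \<and> (a=b \<longleftrightarrow> c=d) \<and> (b<a \<longleftrightarrow> d<c)"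
  by (auto simp: ord_def split: if_splits)

lemma sat0: "qdepth \<phi> = 0 \<Longrightarrow> atq u i1 i2 v j1 j2 \<Longrightarrow> sat u i1 i2 \<phi> = sat v j1 j2 \<phi>"
proof (induction \<phi>)
  case (Qa a z) then show ?case by (cases z) (auto simp: atq_def)
next
  case (Eqv z z') then show ?case using ord_eq_iff[of i1 i2 j1 j2]
    by (cases z; cases z') (auto simp: atq_def)
next
  case (Lessv z z') then show ?case using ord_eq_iff[of i1 i2 j1 j2]
    by (cases z; cases z') (auto simp: atq_def)
qed auto

lemma equiv0_atq: "fo2_equiv u i1 i2 v j1 j2 n \<Longrightarrow> atq u i1 i2 v j1 j2"
proof -
  assume e: "fo2_equiv u i1 i2 v j1 j2 n"
  have s: "sat u i1 i2 \<phi> = sat v j1 j2 \<phi>" if "qdepth \<phi> = 0" for \<phi> :: "'a fo2"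
    using e that unfolding fo2_equiv_def by auto
  have 1: "letter u i1 = letter v j1" using s[of "Qa (letter u i1) VX"] by simp
  have 2: "letter u i2 = letter v j2" using s[of "Qa (letter u i2) VY"] by simp
  have 3: "i1 < i2 \<longleftrightarrow> j1 < j2" using s[of "Lessv VX VY"] by simp
  have 4: "i1 = i2 \<longleftrightarrow> j1 = j2" using s[of "Eqv VX VY"] by simp
  have 5: "ord i1 i2 = ord j1 j2" using 3 4 by (simp add: ord_def)
  show ?thesis using 1 2 5 by (simp add: atq_def)
qed

lemma atq_equiv0: "atq u i1 i2 v j1 j2 \<Longrightarrow> fo2_equiv u i1 i2 v j1 j2 0"
  unfolding fo2_equiv_def using sat0 by blast

definition EF :: "'a list \<Rightarrow> 'a \<Rightarrow> 'a bpos list \<Rightarrow> nat set" where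
  "EF w a rs = {y\<in>{1..length w}. letter w y = a \<and> (rs = [] \<or> (\<exists>q0. pos w rs = Some q0 \<and> q0 < y))}"
definition EL :: "'a list \<Rightarrow> 'a \<Rightarrow> 'a bpos list \<Rightarrow> nat set" where
  "EL w a rs = {y\<in>{1..length w}. letter w y = a \<and> (rs = [] \<or> (\<exists>q0. pos w rs = Some q0 \<and> y < q0))}"

lemma EF_fin: "finite (EF w a rs)" by (simp add: EF_def)
lemma EL_fin: "finite (EL w a rs)" by (simp add: EL_def)
lemma pos_F': "pos w (FirstB a # rs) = (if EF w a rs = {} then None else Some (Min (EF w a rs)))"
  unfolding pos_F EF_def Let_def ..
lemma pos_L': "pos w (LastB a # rs) = (if EL w a rs = {} then None else Some (Max (EL w a rs)))"
  unfolding pos_L EL_def Let_def ..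

lemma phi_sem: "rs \<noteq> [] \<Longrightarrow> sat w i j (phi k rs z) \<longleftrightarrow> (\<exists>p. pos w rs = Some p \<and> holds k (val i j z) p)"
  by (simp add: phi_sem_gen)

lemma satF: "rv' \<noteq> [] \<Longrightarrow> sat w i j (Exq VX (Conj (Qa a VX) (Conj (phi KGt rs VX) (phi k rv' VX)))) \<longleftrightarrow>
   (\<exists>y\<in>EF w a rs. \<exists>p'. pos w rv' = Some p' \<and> holds k y p')"
  by (simp add: EF_def phi_sem_gen Bex_def conj_ac; fastforce)
lemma satL: "rv' \<noteq> [] \<Longrightarrow> sat w i j (Exq VX (Conj (Qa a VX) (Conj (phi KLt rs VX) (phi k rv' VX)))) \<longleftrightarrow>
   (\<exists>y\<in>EL w a rs. \<exists>p'. pos w rv' = Some p' \<and> holds k y p')"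
  by (simp add: EL_def phi_sem_gen Bex_def conj_ac; fastforce)

lemma ordo_phi: "rv \<noteq> [] \<Longrightarrow> ordo (Some (val i j z)) (pos w rv) =
  (if sat w i j (phi KLt rv z) then Some OLess else if sat w i j (phi KGt rv z) then Some OGreater
   else if sat w i j (phi KLe rv z) then Some OEq else None)"
  by (cases "pos w rv") (auto simp: phi_sem ord_def)

lemma defd_phi: "rv \<noteq> [] \<Longrightarrow> pos w rv \<noteq> None \<longleftrightarrow> sat w i j (Disj (phi KLe rv VX) (phi KGt rv VX))"
  by (cases "pos w rv") (auto simp: phi_sem)

lemma ordo_F0: "ordo (pos w (FirstB a # rs)) (pos w rv') = (if pos w (FirstB a # rs) = None \<or> pos w rv' = None then None
   else if (\<exists>y\<in>EF w a rs. \<exists>p'. pos w rv' = Some p' \<and> holds KLt y p') then Some OLess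
   else if (\<exists>y\<in>EF w a rs. \<exists>p'. pos w rv' = Some p' \<and> holds KLe y p') then Some OEq else Some OGreater)"
proof (cases "pos w rv'")
  case None then show ?thesis by (cases "pos w (FirstB a # rs)") auto
next
  case (Some p')
  note M = minsem[OF EF_fin pos_F'[of w a rs], of p']
  show ?thesis using Some M(1,2) by (cases "pos w (FirstB a # rs)") (auto simp: ord_def)
qed

lemma ordo_L0: "ordo (pos w (LastB a # rs)) (pos w rv') = (if pos w (LastB a # rs) = None \<or> pos w rv' = None then None
   else if (\<exists>y\<in>EL w a rs. \<exists>p'. pos w rv' = Some p' \<and> holds KGt y p') then Some OGreater
   else if (\<exists>y\<in>EL w a rs. \<exists>p'. pos w rv' = Some p' \<and> holds KGe y p') then Some OEq else Some OLess)"
proof (cases "pos w rv'")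
  case None then show ?thesis by (cases "pos w (LastB a # rs)") auto
next
  case (Some p')
  note M = maxsem[OF EL_fin pos_L'[of w a rs], of p']
  show ?thesis using Some M(1,2) by (cases "pos w (LastB a # rs)") (auto simp: ord_def)
qed




definition Q :: "'a list \<Rightarrow> nat \<Rightarrow> nat \<Rightarrow> 'a list \<Rightarrow> nat \<Rightarrow> nat \<Rightarrow> nat \<Rightarrow> bool" where
  "Q u i1 i2 v j1 j2 n \<longleftrightarrow> atq u i1 i2 v j1 j2 \<and>
    (\<forall>r. length r \<le> n \<longrightarrow> ordo (Some i1) (rk_eval u r) = ordo (Some j1) (rk_eval v r)
                      \<and> ordo (Some i2) (rk_eval u r) = ordo (Some j2) (rk_eval v r)) \<and>
    (\<forall>r r'. length r \<le> n \<longrightarrow> length r' < n \<longrightarrow>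
        ordo (rk_eval u r) (rk_eval u r') = ordo (rk_eval v r) (rk_eval v r'))"

lemma rk_pos: "rk_eval w r = pos w (rev r)" by (simp add: pos_def)

lemma equiv_Q: assumes e: "fo2_equiv u i1 i2 v j1 j2 n" shows "Q u i1 i2 v j1 j2 n"
proof -
  have s: "sat u i1 i2 \<phi> = sat v j1 j2 \<phi>" if "qdepth \<phi> \<le> n" for \<phi> :: "'a fo2"
    using e that unfolding fo2_equiv_def by auto
  have A: "atq u i1 i2 v j1 j2" using equiv0_atq[OF e] .
  have B: "ordo (Some i1) (rk_eval u r) = ordo (Some j1) (rk_eval v r)
         \<and> ordo (Some i2) (rk_eval u r) = ordo (Some j2) (rk_eval v r)" if "length r \<le> n" for r
  proof (cases "r = []")
    case True then show ?thesis by simp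
  next
    case False
    then have ne: "rev r \<noteq> []" by simp
    have d: "qdepth (phi k (rev r) z) \<le> n" for k z
      using qdepth_phi[of k "rev r" z] that by simp
    show ?thesis
      using ordo_phi[OF ne, where w=u and i=i1 and j=i2 and z=VX] ordo_phi[OF ne, where w=v and i=j1 and j=j2 and z=VX]
        ordo_phi[OF ne, where w=u and i=i1 and j=i2 and z=VY] ordo_phi[OF ne, where w=v and i=j1 and j=j2 and z=VY]
      by (simp add: rk_pos s[OF d])
  qed
  have C: "ordo (rk_eval u r) (rk_eval u r') = ordo (rk_eval v r) (rk_eval v r')"
    if l: "length r \<le> n" "length r' < n" for r r'
  proof (cases "r = [] \<or> r' = []")
    case True then show ?thesis by (cases "rk_eval u r"; cases "rk_eval v r") auto
  next
    case False
    then have ne: "rev r' \<noteq> []" by simp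
    obtain p rs where prs: "rev r = p # rs" using False by (cases "rev r") auto
    have lrs: "length rs < n" using l prs by (metis length_Cons length_rev Suc_le_lessD)
    have d1: "qdepth (Disj (phi KLe (rev r) VX) (phi KGt (rev r) VX)) \<le> n"
      using qdepth_phi[of KLe "rev r" VX] qdepth_phi[of KGt "rev r" VX] l by simp
    have d2: "qdepth (Disj (phi KLe (rev r') VX) (phi KGt (rev r') VX)) \<le> n"
      using qdepth_phi[of KLe "rev r'" VX] qdepth_phi[of KGt "rev r'" VX] l by simp
    have d3: "qdepth (Exq VX (Conj (Qa a VX) (Conj (phi k1 rs VX) (phi k2 (rev r') VX)))) \<le> n" for a k1 k2
      using qdepth_phi[of k1 rs VX] qdepth_phi[of k2 "rev r'" VX] l lrs by simp
    have D1: "pos u (rev r) = None \<longleftrightarrow> pos v (rev r) = None"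
      using defd_phi[of "rev r" u i1 i2] defd_phi[of "rev r" v j1 j2] s[OF d1] prs by auto
    have D2: "pos u (rev r') = None \<longleftrightarrow> pos v (rev r') = None"
      using defd_phi[OF ne, of u i1 i2] defd_phi[OF ne, of v j1 j2] s[OF d2] by auto
    show ?thesis
    proof (cases p)
      case (FirstB a)
      have E: "(\<exists>y\<in>EF u a rs. \<exists>p'. pos u (rev r') = Some p' \<and> holds k y p') \<longleftrightarrow>
               (\<exists>y\<in>EF v a rs. \<exists>p'. pos v (rev r') = Some p' \<and> holds k y p')" for k
        using satF[OF ne, of u i1 i2 a rs k] satF[OF ne, of v j1 j2 a rs k] s[OF d3] by simp
      show ?thesis using prs FirstB D1 D2 E by (simp only: rk_pos ordo_F0)
    next
      case (LastB a)
      have E: "(\<exists>y\<in>EL u a rs. \<exists>p'. pos u (rev r') = Some p' \<and> holds k y p') \<longleftrightarrow>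
               (\<exists>y\<in>EL v a rs. \<exists>p'. pos v (rev r') = Some p' \<and> holds k y p')" for k
        using satL[OF ne, of u i1 i2 a rs k] satL[OF ne, of v j1 j2 a rs k] s[OF d3] by simp
      show ?thesis using prs LastB D1 D2 E by (simp only: rk_pos ordo_L0)
    qed
  qed
  show ?thesis unfolding Q_def using A B C by blast
qed




lemma ord_flip: "ord a b = ord c d \<Longrightarrow> ord b a = ord d c"
  by (auto simp: ord_def split: if_splits)

lemma Q_sym: "Q u i1 i2 v j1 j2 n \<Longrightarrow> Q v j1 j2 u i1 i2 n"
  unfolding Q_def atq_def by metis

lemma Q_swap: "Q u i1 i2 v j1 j2 n \<Longrightarrow> Q u i2 i1 v j2 j1 n"
  unfolding Q_def atq_def using ord_flip by metis

lemma Q_step: assumes "Q u i1 i2 v j1 j2 (Suc m)" "letter u k = letter v k'" "ord k i2 = ord k' j2"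
  "\<forall>r. length r \<le> m \<longrightarrow> ordo (Some k) (rk_eval u r) = ordo (Some k') (rk_eval v r)"
  shows "Q u k i2 v k' j2 m"
  using assms unfolding Q_def atq_def by (metis le_SucI less_SucI)

lemma ordo_None: "ordo (Some i) None = None" by simp

lemma ext_left: assumes k: "k \<in> {1..length u}" and nr: "\<forall>r q. length r \<le> m \<longrightarrow> rk_eval u r = Some q \<longrightarrow> q \<noteq> k"
  shows "\<exists>r p. length r \<le> Suc m \<and> rk_eval u r = Some p \<and> p \<le> k \<and> letter u p = letter u k \<and>
     (\<forall>r' q. length r' \<le> m \<longrightarrow> rk_eval u r' = Some q \<longrightarrow> ord p q = ord k q)"
proof -
  define a where "a = letter u k"
  define S where "S = {q. \<exists>r. length r \<le> m \<and> rk_eval u r = Some q \<and> q < k}"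
  have fS: "finite S" unfolding S_def by (rule finite_subset[of _ "{..<k}"]) auto
  show ?thesis
  proof (cases "S = {}")
    case True
    obtain p where p: "bp_rel u (FirstB a) 0 = Some p"
      using k bp_rel_F_None[of u a 0] by (cases "bp_rel u (FirstB a) 0") (auto simp: a_def)
    have pp: "p \<le> k" "letter u p = a" using p k by (auto simp: bp_rel_F_Some a_def)
    have "rk_eval u [FirstB a] = Some p" using p by (simp add: bp_abs_F)
    moreover have "ord p q = ord k q" if "length r' \<le> m" "rk_eval u r' = Some q" for r' q
    proof -
      have "q \<noteq> k" using nr that by blast
      moreover have "\<not> q < k" using True that unfolding S_def by blast
      ultimately show ?thesis using pp by (cases "q < k") (auto simp: ord_def)
    qed
    ultimately show ?thesis using pp a_def by (intro exI[of _ "[FirstB a]"] exI[of _ p]) auto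
  next
    case False
    define L where "L = Max S"
    have "L \<in> S" using fS False unfolding L_def by (rule Max_in)
    then obtain rL where rL: "length rL \<le> m" "rk_eval u rL = Some L" "L < k" unfolding S_def by blast
    have rLne: "rL \<noteq> []" using rL(2) by auto
    obtain p where p: "bp_rel u (FirstB a) L = Some p"
      using k rL(3) bp_rel_F_None[of u a L] by (cases "bp_rel u (FirstB a) L") (auto simp: a_def)
    have pp: "L < p" "p \<le> k" "letter u p = a" using p k rL(3) by (auto simp: bp_rel_F_Some a_def)
    have "rk_eval u (rL @ [FirstB a]) = Some p" using p rL(2) rLne by (simp add: rk_eval_snoc)
    moreover have "ord p q = ord k q" if "length r' \<le> m" "rk_eval u r' = Some q" for r' q
    proof -
      have "q \<noteq> k" using nr that by blast
      moreover have "q < k \<Longrightarrow> q \<le> L" using that fS unfolding L_def S_def by (auto intro!: Max_ge)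
      ultimately show ?thesis using pp by (cases "q < k") (auto simp: ord_def)
    qed
    ultimately show ?thesis using pp a_def rL(1) by (intro exI[of _ "rL @ [FirstB a]"] exI[of _ p]) auto
  qed
qed

lemma ext_right: assumes k: "k \<in> {1..length u}" and nr: "\<forall>r q. length r \<le> m \<longrightarrow> rk_eval u r = Some q \<longrightarrow> q \<noteq> k"
  shows "\<exists>r p. length r \<le> Suc m \<and> rk_eval u r = Some p \<and> k \<le> p \<and> letter u p = letter u k \<and>
     (\<forall>r' q. length r' \<le> m \<longrightarrow> rk_eval u r' = Some q \<longrightarrow> ord p q = ord k q)"
proof -
  define a where "a = letter u k"
  define S where "S = {q. \<exists>r. length r \<le> m \<and> rk_eval u r = Some q \<and> k < q}"
  have fS: "finite S" unfolding S_def
    by (rule finite_subset[of _ "{..length u}"]) (auto dest: rk_eval_Some)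
  show ?thesis
  proof (cases "S = {}")
    case True
    obtain p where p: "bp_rel u (LastB a) (Suc (length u)) = Some p"
      using k bp_rel_L_None[of u a "Suc (length u)"] by (cases "bp_rel u (LastB a) (Suc (length u))") (auto simp: a_def)
    have pp: "k \<le> p" "letter u p = a" using p k by (auto simp: bp_rel_L_Some a_def)
    have "rk_eval u [LastB a] = Some p" using p by (simp add: bp_abs_L)
    moreover have "ord p q = ord k q" if "length r' \<le> m" "rk_eval u r' = Some q" for r' q
    proof -
      have "q \<noteq> k" using nr that by blast
      moreover have "\<not> k < q" using True that unfolding S_def by blast
      ultimately show ?thesis using pp by (cases "q < k") (auto simp: ord_def)
    qed
    ultimately show ?thesis using pp a_def by (intro exI[of _ "[LastB a]"] exI[of _ p]) auto
  next
    case False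
    define R where "R = Min S"
    have "R \<in> S" using fS False unfolding R_def by (rule Min_in)
    then obtain rR where rR: "length rR \<le> m" "rk_eval u rR = Some R" "k < R" unfolding S_def by blast
    have rRne: "rR \<noteq> []" using rR(2) by auto
    obtain p where p: "bp_rel u (LastB a) R = Some p"
      using k rR(3) bp_rel_L_None[of u a R] by (cases "bp_rel u (LastB a) R") (auto simp: a_def)
    have pp: "p < R" "k \<le> p" "letter u p = a" using p k rR(3) by (auto simp: bp_rel_L_Some a_def)
    have "rk_eval u (rR @ [LastB a]) = Some p" using p rR(2) rRne by (simp add: rk_eval_snoc)
    moreover have "ord p q = ord k q" if "length r' \<le> m" "rk_eval u r' = Some q" for r' q
    proof -
      have "q \<noteq> k" using nr that by blast
      moreover have "k < q \<Longrightarrow> R \<le> q" using that fS unfolding R_def S_def by (auto intro!: Min_le)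
      ultimately show ?thesis using pp by (cases "q < k") (auto simp: ord_def)
    qed
    ultimately show ?thesis using pp a_def rR(1) by (intro exI[of _ "rR @ [LastB a]"] exI[of _ p]) auto
  qed
qed




lemma Q_transfer: assumes "Q u i1 i2 v j1 j2 n" "length r \<le> n" "rk_eval u r = Some p"
  shows "\<exists>p'. rk_eval v r = Some p'"
proof -
  have "ordo (Some i1) (rk_eval u r) = ordo (Some j1) (rk_eval v r)" using assms unfolding Q_def by blast
  then show ?thesis using assms(3) by (cases "rk_eval v r") auto
qed

lemma extend: assumes Q: "Q u i1 i2 v j1 j2 (Suc m)" and i2: "i2 \<in> {1..length u}" and j2: "j2 \<in> {1..length v}"
  and k: "k \<in> {1..length u}"
  shows "\<exists>k'\<in>{1..length v}. Q u k i2 v k' j2 m"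
proof -
  have Dd: "ordo (Some i2) (rk_eval u r) = ordo (Some j2) (rk_eval v r)" if "length r \<le> Suc m" for r
    using Q that unfolding Q_def by blast
  have Bb: "ordo (rk_eval u r) (rk_eval u r') = ordo (rk_eval v r) (rk_eval v r')"
    if "length r \<le> Suc m" "length r' \<le> m" for r r'
    using Q that unfolding Q_def by (meson le_imp_less_Suc)
  have viaR: "\<exists>k'\<in>{1..length v}. Q u k i2 v k' j2 m"
    if r: "length r \<le> Suc m" "rk_eval u r = Some p" and lp: "letter u p = letter u k"
       and op: "ord k i2 = ord p i2"
       and oq: "\<forall>r' q. length r' \<le> m \<longrightarrow> rk_eval u r' = Some q \<longrightarrow> ord p q = ord k q" for r p
  proof -
    obtain p' where p': "rk_eval v r = Some p'" using Q_transfer[OF Q r] by blast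
    have rne: "r \<noteq> []" using r(2) by auto
    have l1: "letter v p' = letter u k" using rk_eval_Some[OF p'] rk_eval_Some[OF r(2)] lp by simp
    have "ord i2 p = ord j2 p'" using Dd[OF r(1)] r(2) p' by simp
    then have o1: "ord k i2 = ord p' j2" using op ord_flip by metis
    have o2: "ordo (Some k) (rk_eval u r') = ordo (Some p') (rk_eval v r')" if "length r' \<le> m" for r'
    proof (cases "rk_eval u r'")
      case None
      then show ?thesis using Bb[OF r(1) that] r(2) p' by (cases "rk_eval v r'") auto
    next
      case (Some q)
      then show ?thesis using Bb[OF r(1) that] r(2) p' oq that by (cases "rk_eval v r'") auto
    qed
    have "Q u k i2 v p' j2 m" using Q_step[OF Q l1[symmetric] o1] o2 by blast
    then show ?thesis using rk_eval_Some[OF p'] by blast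
  qed
  show ?thesis
  proof (cases "k = i2")
    case True
    have "Q u k i2 v j2 j2 m"
      using Q_step[OF Q, of k j2] Q True Dd unfolding Q_def atq_def by (simp add: ord_def)
    then show ?thesis using j2 by blast
  next
    case False
    show ?thesis
    proof (cases "\<exists>r. length r \<le> m \<and> rk_eval u r = Some k")
      case True
      then obtain r where r: "length r \<le> m" "rk_eval u r = Some k" by blast
      have "\<forall>r' q. length r' \<le> m \<longrightarrow> rk_eval u r' = Some q \<longrightarrow> ord k q = ord k q" by simp
      then show ?thesis using viaR[of r k] r by simp
    next
      case nr0: False
      then have nr: "\<forall>r q. length r \<le> m \<longrightarrow> rk_eval u r = Some q \<longrightarrow> q \<noteq> k" by blast
      show ?thesis
      proof (cases "k < i2")
        case True
        obtain r p where rp: "length r \<le> Suc m" "rk_eval u r = Some p" "p \<le> k" "letter u p = letter u k"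
          "\<forall>r' q. length r' \<le> m \<longrightarrow> rk_eval u r' = Some q \<longrightarrow> ord p q = ord k q"
          using ext_left[OF k nr] by blast
        have "ord k i2 = ord p i2" using True rp(3) by (simp add: ord_def)
        then show ?thesis using viaR[OF rp(1,2,4) _ rp(5)] by blast
      next
        case False
        then have gt: "i2 < k" using \<open>k \<noteq> i2\<close> by simp
        obtain r p where rp: "length r \<le> Suc m" "rk_eval u r = Some p" "k \<le> p" "letter u p = letter u k"
          "\<forall>r' q. length r' \<le> m \<longrightarrow> rk_eval u r' = Some q \<longrightarrow> ord p q = ord k q"
          using ext_right[OF k nr] by blast
        have "ord k i2 = ord p i2" using gt rp(3) by (simp add: ord_def)
        then show ?thesis using viaR[OF rp(1,2,4) _ rp(5)] by blast
      qed
    qed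
  qed
qed

lemma extend_all: assumes Q: "Q u i1 i2 v j1 j2 (Suc m)"
  and r: "i1 \<in> {1..length u}" "i2 \<in> {1..length u}" "j1 \<in> {1..length v}" "j2 \<in> {1..length v}"
  shows "(\<forall>k\<in>{1..length u}. \<exists>k'\<in>{1..length v}. Q u k i2 v k' j2 m)"
    "(\<forall>k'\<in>{1..length v}. \<exists>k\<in>{1..length u}. Q u k i2 v k' j2 m)"
    "(\<forall>k\<in>{1..length u}. \<exists>k'\<in>{1..length v}. Q u i1 k v j1 k' m)"
    "(\<forall>k'\<in>{1..length v}. \<exists>k\<in>{1..length u}. Q u i1 k v j1 k' m)"
proof -
  show "\<forall>k\<in>{1..length u}. \<exists>k'\<in>{1..length v}. Q u k i2 v k' j2 m"
    using extend[OF Q r(2,4)] by blast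
  show "\<forall>k'\<in>{1..length v}. \<exists>k\<in>{1..length u}. Q u k i2 v k' j2 m"
    using extend[OF Q_sym[OF Q] r(4,2)] Q_sym by blast
  show "\<forall>k\<in>{1..length u}. \<exists>k'\<in>{1..length v}. Q u i1 k v j1 k' m"
    using extend[OF Q_swap[OF Q] r(1,3)] Q_swap by blast
  show "\<forall>k'\<in>{1..length v}. \<exists>k\<in>{1..length u}. Q u i1 k v j1 k' m"
    using extend[OF Q_sym[OF Q_swap[OF Q]] r(3,1)] Q_sym Q_swap by blast
qed

lemma ex_transfer: assumes "\<forall>k\<in>A. \<exists>k'\<in>B. Rl k k'" "\<forall>k'\<in>B. \<exists>k\<in>A. Rl k k'"
  "\<And>k k'. k\<in>A \<Longrightarrow> k'\<in>B \<Longrightarrow> Rl k k' \<Longrightarrow> P k = P' k'"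
  shows "(\<exists>k\<in>A. P k) = (\<exists>k'\<in>B. P' k')" "(\<forall>k\<in>A. P k) = (\<forall>k'\<in>B. P' k')"
  using assms by metis+

lemma Q_atq: "Q u i1 i2 v j1 j2 n \<Longrightarrow> atq u i1 i2 v j1 j2" by (simp add: Q_def)

lemma Q_sat: "Q u i1 i2 v j1 j2 n \<Longrightarrow> i1 \<in> {1..length u} \<Longrightarrow> i2 \<in> {1..length u} \<Longrightarrow>
  j1 \<in> {1..length v} \<Longrightarrow> j2 \<in> {1..length v} \<Longrightarrow> qdepth \<phi> \<le> n \<Longrightarrow> sat u i1 i2 \<phi> = sat v j1 j2 \<phi>"
proof (induction \<phi> arbitrary: n i1 i2 j1 j2)
  case (Qa a z) then show ?case using sat0[of "Qa a z" u i1 i2 v j1 j2] Q_atq[OF Qa.prems(1)] by simp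
next
  case (Eqv z z') then show ?case using sat0[of "Eqv z z'" u i1 i2 v j1 j2] Q_atq[OF Eqv.prems(1)] by simp
next
  case (Lessv z z') then show ?case using sat0[of "Lessv z z'" u i1 i2 v j1 j2] Q_atq[OF Lessv.prems(1)] by simp
next
  case (Neg \<phi>) then show ?case by simp
next
  case (Conj \<phi> \<psi>) then show ?case by simp
next
  case (Disj \<phi> \<psi>) then show ?case by simp
next
  case (Exq z \<phi>)
  then obtain m where m: "n = Suc m" "qdepth \<phi> \<le> m" by (cases n) auto
  note X = extend_all[OF Exq.prems(1)[unfolded m] Exq.prems(2-5)]
  show ?case
  proof (cases z)
    case VX
    have "sat u k i2 \<phi> = sat v k' j2 \<phi>" if "k\<in>{1..length u}" "k'\<in>{1..length v}" "Q u k i2 v k' j2 m" for k k'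
      using Exq.IH[OF that(3) that(1) Exq.prems(3) that(2) Exq.prems(5) m(2)] .
    from ex_transfer(1)[OF X(1,2) this] show ?thesis using VX by simp
  next
    case VY
    have "sat u i1 k \<phi> = sat v j1 k' \<phi>" if "k\<in>{1..length u}" "k'\<in>{1..length v}" "Q u i1 k v j1 k' m" for k k'
      using Exq.IH[OF that(3) Exq.prems(2) that(1) Exq.prems(4) that(2) m(2)] .
    from ex_transfer(1)[OF X(3,4) this] show ?thesis using VY by simp
  qed
next
  case (Allq z \<phi>)
  then obtain m where m: "n = Suc m" "qdepth \<phi> \<le> m" by (cases n) auto
  note X = extend_all[OF Allq.prems(1)[unfolded m] Allq.prems(2-5)]
  show ?case
  proof (cases z)
    case VX
    have "sat u k i2 \<phi> = sat v k' j2 \<phi>" if "k\<in>{1..length u}" "k'\<in>{1..length v}" "Q u k i2 v k' j2 m" for k k'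
      using Allq.IH[OF that(3) that(1) Allq.prems(3) that(2) Allq.prems(5) m(2)] .
    from ex_transfer(2)[OF X(1,2) this] show ?thesis using VX by simp
  next
    case VY
    have "sat u i1 k \<phi> = sat v j1 k' \<phi>" if "k\<in>{1..length u}" "k'\<in>{1..length v}" "Q u i1 k v j1 k' m" for k k'
      using Allq.IH[OF that(3) Allq.prems(2) that(1) Allq.prems(4) that(2) m(2)] .
    from ex_transfer(2)[OF X(3,4) this] show ?thesis using VY by simp
  qed
qed




lemma ordo_None2[simp]: "ordo x None = None" by (cases x) auto

lemma extend_def: "2 \<le> length w \<Longrightarrow> q \<in> {1..length w} \<Longrightarrow> \<exists>s. length s = k \<and> rk_cont w s (Some q) \<noteq> None"
proof (induction k arbitrary: q)
  case 0 then show ?case by (intro exI[of _ "[]"]) simp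
next
  case (Suc k)
  show ?case
  proof (cases "q < length w")
    case True
    have b: "bp_rel w (FirstB (letter w (Suc q))) q = Some (Suc q)"
      using True by (auto simp: bp_rel_F_Some)
    obtain s where s: "length s = k" "rk_cont w s (Some (Suc q)) \<noteq> None"
      using Suc.IH[of "Suc q"] Suc.prems True by auto
    show ?thesis using b s by (intro exI[of _ "FirstB (letter w (Suc q)) # s"]) simp
  next
    case False
    then have qe: "q = length w" using Suc.prems by simp
    have b: "bp_rel w (LastB (letter w (q - 1))) q = Some (q - 1)"
      using qe Suc.prems(1) by (auto simp: bp_rel_L_Some)
    have qm: "q - 1 \<in> {1..length w}" using qe Suc.prems(1) by auto
    obtain s where s: "length s = k" "rk_cont w s (Some (q - 1)) \<noteq> None"
      using Suc.IH[OF Suc.prems(1) qm] by blast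
    show ?thesis using b s by (intro exI[of _ "LastB (letter w (q - 1)) # s"]) simp
  qed
qed

lemma single: assumes "length w = 1" "rk_eval w r = Some q" shows "\<exists>p. r = [p]"
proof -
  obtain p ps where r: "r = p # ps" using assms(2) by (cases r) auto
  have q: "bp_abs w p \<noteq> None" using assms(2) r by (cases "bp_abs w p") auto
  then obtain q0 where q0: "bp_abs w p = Some q0" by auto
  have q01: "q0 = 1" using q0 assms(1) by (cases p) (auto simp: bp_abs_F bp_abs_L bp_rel_F_Some bp_rel_L_Some)
  have "ps = []"
  proof (rule ccontr)
    assume "ps \<noteq> []"
    then obtain p' ps' where "ps = p' # ps'" by (cases ps) auto
    moreover have "bp_rel w p' 1 = None" using assms(1)
      by (cases p') (auto simp: bp_rel_F_None bp_rel_L_None)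
    ultimately show False using assms(2) r q0 q01 by simp
  qed
  then show ?thesis using r by blast
qed

lemma v_to_u: assumes RR: "R n u = R n v" and l: "letter u i1 = letter v j1"
  and i1: "i1 \<in> {1..length u}" and j1: "j1 \<in> {1..length v}"
  and r: "length r \<le> n" "r \<noteq> []" "rk_eval v r \<noteq> None"
  shows "rk_eval u r \<noteq> None"
proof (cases "length r = n")
  case True
  then have "r \<in> R n v" using r unfolding R_def by (cases r) auto
  then show ?thesis using RR unfolding R_def by auto
next
  case False
  obtain q where q: "rk_eval v r = Some q" using r(3) by auto
  show ?thesis
  proof (cases "2 \<le> length v")
    case True
    obtain s where s: "length s = n - length r" "rk_cont v s (Some q) \<noteq> None"
      using extend_def[OF True] rk_eval_Some[OF q] by blast
    have "rk_eval v (r @ s) \<noteq> None" using s q r(2) by (simp add: rk_eval_append)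
    moreover have "length (r @ s) = n" using s r(1) by simp
    ultimately have "r @ s \<in> R n v" using r(2) unfolding R_def by (cases n) auto
    then have "rk_eval u (r @ s) \<noteq> None" using RR unfolding R_def by auto
    then show ?thesis using rk_eval_prefix r(2) by blast
  next
    case False
    then have lv: "length v = 1" using j1 by simp
    obtain p where p: "r = [p]" using single[OF lv q] by blast
    have "letter v q = bl p" using rk_eval_Some[OF q] p by simp
    moreover have "q = j1" using rk_eval_Some[OF q] lv j1 by simp
    ultimately have "letter u i1 = bl p" using l by simp
    then show ?thesis using p i1
      by (cases p) (auto simp: bp_abs_F bp_abs_L bp_rel_F_None bp_rel_L_None)
  qed
qed

lemma Rstar_mem: "r \<in> Rstar n w \<longleftrightarrow> 1 \<le> length r \<and> length r \<le> n \<and> rk_eval w r \<noteq> None"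
  unfolding Rstar_def R_def by auto

lemma lhs_Q:
  assumes rg: "i1 \<in> {1..length u}" "j1 \<in> {1..length v}"
  and H1: "R n u = R n v"
  and H2: "\<forall>r\<in>Rstar n u. \<forall>r'\<in>Rstar (n - 1) u.
                ordo (rk_eval u r) (rk_eval u r') = ordo (rk_eval v r) (rk_eval v r')"
  and H3: "fo2_equiv u i1 i2 v j1 j2 0"
  and H4: "\<forall>r\<in>Rstar n u.
                ordo (Some i1) (rk_eval u r) = ordo (Some j1) (rk_eval v r)
              \<and> ordo (Some i2) (rk_eval u r) = ordo (Some j2) (rk_eval v r)"
  shows "Q u i1 i2 v j1 j2 n"
proof -
  have A: "atq u i1 i2 v j1 j2" using equiv0_atq[OF H3] .
  have vu: "rk_eval v r = None" if "rk_eval u r = None" "length r \<le> n" for r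
  proof (cases "r = []")
    case True then show ?thesis by simp
  next
    case False
    then show ?thesis using v_to_u[OF H1 _ rg, of r] A that unfolding atq_def by blast
  qed
  have D: "ordo (Some i1) (rk_eval u r) = ordo (Some j1) (rk_eval v r)
         \<and> ordo (Some i2) (rk_eval u r) = ordo (Some j2) (rk_eval v r)" if "length r \<le> n" for r
  proof (cases "rk_eval u r = None")
    case True then show ?thesis using vu[OF True that] by simp
  next
    case False
    then have "r \<noteq> []" by auto
    then have "r \<in> Rstar n u" using False that by (simp add: Rstar_mem Suc_le_eq)
    then show ?thesis using H4 by blast
  qed
  have B: "ordo (rk_eval u r) (rk_eval u r') = ordo (rk_eval v r) (rk_eval v r')"
    if "length r \<le> n" "length r' < n" for r r'
  proof (cases "rk_eval u r = None \<or> rk_eval u r' = None")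
    case True then show ?thesis using vu that by auto
  next
    case False
    then have "r \<noteq> []" "r' \<noteq> []" by auto
    then have "r \<in> Rstar n u" "r' \<in> Rstar (n - 1) u" using False that by (auto simp: Rstar_mem Suc_le_eq)
    then show ?thesis using H2 by blast
  qed
  show ?thesis unfolding Q_def using A D B by blast
qed

lemma Q_lhs: assumes Q: "Q u i1 i2 v j1 j2 n"
  shows "(R n u = R n v
          \<and> (\<forall>r\<in>Rstar n u. \<forall>r'\<in>Rstar (n - 1) u.
                ordo (rk_eval u r) (rk_eval u r') = ordo (rk_eval v r) (rk_eval v r'))
          \<and> fo2_equiv u i1 i2 v j1 j2 0
          \<and> (\<forall>r\<in>Rstar n u.
                ordo (Some i1) (rk_eval u r) = ordo (Some j1) (rk_eval v r)
              \<and> ordo (Some i2) (rk_eval u r) = ordo (Some j2) (rk_eval v r)))"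
proof -
  have D: "\<And>r. length r \<le> n \<Longrightarrow> ordo (Some i1) (rk_eval u r) = ordo (Some j1) (rk_eval v r)
                      \<and> ordo (Some i2) (rk_eval u r) = ordo (Some j2) (rk_eval v r)"
    using Q unfolding Q_def by blast
  have B: "\<And>r r'. length r \<le> n \<Longrightarrow> length r' < n \<Longrightarrow>
        ordo (rk_eval u r) (rk_eval u r') = ordo (rk_eval v r) (rk_eval v r')"
    using Q unfolding Q_def by blast
  have A: "atq u i1 i2 v j1 j2" using Q unfolding Q_def by blast
  have NN: "rk_eval u r = None \<longleftrightarrow> rk_eval v r = None" if "length r \<le> n" for r
    using D[OF that] by (cases "rk_eval u r"; cases "rk_eval v r") auto
  have 1: "R n u = R n v" unfolding R_def
  proof (rule Collect_cong)
    fix r :: "'a bpos list"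
    show "(length r = n \<and> n \<ge> 1 \<and> rk_eval u r \<noteq> None) = (length r = n \<and> n \<ge> 1 \<and> rk_eval v r \<noteq> None)"
      using NN[of r] by auto
  qed
  have 2: "\<forall>r\<in>Rstar n u. \<forall>r'\<in>Rstar (n - 1) u.
                ordo (rk_eval u r) (rk_eval u r') = ordo (rk_eval v r) (rk_eval v r')"
  proof (intro ballI)
    fix r r' assume "r \<in> Rstar n u" "r' \<in> Rstar (n - 1) u"
    then have "length r \<le> n" "length r' < n" by (auto simp: Rstar_mem)
    then show "ordo (rk_eval u r) (rk_eval u r') = ordo (rk_eval v r) (rk_eval v r')" by (rule B)
  qed
  show ?thesis using 1 2 atq_equiv0[OF A] D by (auto simp: Rstar_mem)
qed

theorem theorem3p9:
  fixes u v :: "('a::finite) list" and i1 i2 j1 j2 n :: nat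
  assumes "i1 \<in> {1..length u}" "i2 \<in> {1..length u}"
    and "j1 \<in> {1..length v}" "j2 \<in> {1..length v}"
  shows "(R n u = R n v
          \<and> (\<forall>r\<in>Rstar n u. \<forall>r'\<in>Rstar (n - 1) u.
                ordo (rk_eval u r) (rk_eval u r') = ordo (rk_eval v r) (rk_eval v r'))
          \<and> fo2_equiv u i1 i2 v j1 j2 0
          \<and> (\<forall>r\<in>Rstar n u.
                ordo (Some i1) (rk_eval u r) = ordo (Some j1) (rk_eval v r)
              \<and> ordo (Some i2) (rk_eval u r) = ordo (Some j2) (rk_eval v r)))
         \<longleftrightarrow> fo2_equiv u i1 i2 v j1 j2 n" (is "?lhs \<longleftrightarrow> ?rhs")
proof
  assume L: ?lhs
  then have "Q u i1 i2 v j1 j2 n" using lhs_Q[OF assms(1,3)] by blast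
  then show "fo2_equiv u i1 i2 v j1 j2 n"
    unfolding fo2_equiv_def using Q_sat assms by blast
next
  assume "fo2_equiv u i1 i2 v j1 j2 n"
  then show ?lhs using Q_lhs equiv_Q by blast
qed


end
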